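(* Let $(A,\star)$ be a pre-Lie algebra and define $x\circ y=x\star y+2y\star x$ for $x,y\in A$. Then $(A,\circ)$ is an anti-pre-Lie algebra if and only if $(A,\star)$ is a Novikov algebra. Moreover, in this case $(A,\circ)$ is an admissible Novikov algebra.
   Context: All vector spaces are finite-dimensional over a field $\mathbb F$ of characteristic $0$. A pre-Lie algebra is $(A,\star)$ with $(x\star y)\star z-x\star(y\star z)=(y\star x)\star z-y\star(x\star z)$ for all $x,y,z$; a Novikov algebra is a pre-Lie algebra with additionally $(x\star y)\star z=(x\star z)\star y$. For a bilinear operation $\circ$ write $[x,y]=x\circ y-y\circ x$. An anti-pre-Lie algebra is $(A,\circ)$ such that for all $x,y,z$: (i) $x\circ(y\circ z)-y\circ(x\circ z)=[y,x]\circ z$, and (ii) $[x,y]\circ z+[y,z]\circ x+[z,x]\circ y=0$. An admissible Novikov algebra is $(A,\circ)$ satisfying (i) and $2x\circ[y,z]=(x\circ y)\circ z-(x\circ z)\circ y$. *)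

theory Defs
  imports Main "HOL.Vector_Spaces"
begin

definition fd_vector_space :: "('k::field_char_0 \<Rightarrow> 'v::ab_group_add \<Rightarrow> 'v) \<Rightarrow> bool" where
  "fd_vector_space scale \<longleftrightarrow> (\<exists>B. finite_dimensional_vector_space scale B)"

definition bilinear_op :: "('k::field_char_0 \<Rightarrow> 'v::ab_group_add \<Rightarrow> 'v) \<Rightarrow> ('v \<Rightarrow> 'v \<Rightarrow> 'v) \<Rightarrow> bool" where
  "bilinear_op scale m \<longleftrightarrow>
     (\<forall>x. Vector_Spaces.linear scale scale (m x)) \<and>
     (\<forall>y. Vector_Spaces.linear scale scale (\<lambda>x. m x y))"

definition commutator :: "('v \<Rightarrow> 'v \<Rightarrow> 'v) \<Rightarrow> 'v \<Rightarrow> 'v \<Rightarrow> 'v::ab_group_add" where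
  "commutator m x y = m x y - m y x"

definition pre_lie :: "('v::ab_group_add \<Rightarrow> 'v \<Rightarrow> 'v) \<Rightarrow> bool" where
  "pre_lie m \<longleftrightarrow> (\<forall>x y z. m (m x y) z - m x (m y z) = m (m y x) z - m y (m x z))"

definition novikov :: "('v::ab_group_add \<Rightarrow> 'v \<Rightarrow> 'v) \<Rightarrow> bool" where
  "novikov m \<longleftrightarrow> pre_lie m \<and> (\<forall>x y z. m (m x y) z = m (m x z) y)"

definition anti_pre_lie :: "('v::ab_group_add \<Rightarrow> 'v \<Rightarrow> 'v) \<Rightarrow> bool" where
  "anti_pre_lie m \<longleftrightarrow>
     (\<forall>x y z. m x (m y z) - m y (m x z) = m (commutator m y x) z) \<and>
     (\<forall>x y z. m (commutator m x y) z + m (commutator m y z) x + m (commutator m z x) y = 0)"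

definition admissible_novikov :: "('k::field_char_0 \<Rightarrow> 'v \<Rightarrow> 'v) \<Rightarrow> ('v::ab_group_add \<Rightarrow> 'v \<Rightarrow> 'v) \<Rightarrow> bool" where
  "admissible_novikov scale m \<longleftrightarrow>
     (\<forall>x y z. m x (m y z) - m y (m x z) = m (commutator m y x) z) \<and>
     (\<forall>x y z. scale 2 (m x (commutator m y z)) = m (m x y) z - m (m x z) y)"

end

theory Submission
  imports Defs
begin

theorem proposition3p5:
  fixes scale :: "'k::field_char_0 \<Rightarrow> 'v::ab_group_add \<Rightarrow> 'v"
    and star :: "'v \<Rightarrow> 'v \<Rightarrow> 'v"
  assumes "fd_vector_space scale"
    and "bilinear_op scale star"
    and "pre_lie star"
  defines "circ \<equiv> (\<lambda>x y. star x y + scale 2 (star y x))"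
  shows "(anti_pre_lie circ \<longleftrightarrow> novikov star)
         \<and> (novikov star \<longrightarrow> admissible_novikov scale circ)"
proof -
  obtain B where "finite_dimensional_vector_space scale B"
    using assms(1) unfolding fd_vector_space_def by blast
  then have vs: "vector_space scale"
    unfolding finite_dimensional_vector_space_def by blast
  have sl: "scale (a + b) x = scale a x + scale b x"
    and s1: "scale 1 x = x" and ss: "scale a (scale b x) = scale (a * b) x"
    and sr: "scale a (x + y) = scale a x + scale a y" for a b x y
    using vs unfolding vector_space_def module_def by blast+
  have S2: "scale 2 v = v + v" for v
  proof -
    have "scale 2 v = scale (1 + 1) v" by simp
    also have "\<dots> = v + v" by (simp only: sl s1)
    finally show ?thesis .
  qed
  have S6: "scale 6 v = v + v + v + v + v + v" for v
  proof -
    have "scale 6 v = scale (1 + 1 + 1 + 1 + 1 + 1) v" by simp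
    also have "\<dots> = v + v + v + v + v + v" by (simp only: sl s1)
    finally show ?thesis .
  qed
  have div6: "w = 0" if "w + w + w + w + w + w = 0" for w :: 'v
  proof -
    have "w = scale ((1/6) * 6) w" by (simp add: s1)
    also have "\<dots> = scale (1/6) (scale 6 w)" by (simp add: ss)
    also have "\<dots> = scale (1/6) 0" using that S6 by simp
    also have "\<dots> = 0" using sr[of "1/6" 0 0] by simp
    finally show ?thesis .
  qed
  have addR: "star x (a + b) = star x a + star x b" for x a b
    using assms(2) unfolding bilinear_op_def linear_iff by blast
  have addL: "star (a + b) y = star a y + star b y" for y a b
    using assms(2) unfolding bilinear_op_def linear_iff by blast
  have zeroR: "star x 0 = 0" for x using addR[of x 0 0] by simp
  have zeroL: "star 0 x = 0" for x using addL[of 0 0 x] by simp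
  have negR: "star x (- a) = - star x a" for x a
    using addR[of x a "- a"] zeroR[of x] by (simp add: eq_neg_iff_add_eq_0 add.commute)
  have negL: "star (- a) x = - star a x" for x a
    using addL[of a "- a" x] zeroL[of x] by (simp add: eq_neg_iff_add_eq_0 add.commute)
  have subR: "star x (a - b) = star x a - star x b" for x a b
    using addR[of x a "- b"] negR by simp
  have subL: "star (a - b) x = star a x - star b x" for x a b
    using addL[of a "- b" x] negL by simp
  note dist = addR addL negR negL subR subL
  have C: "circ x y = star x y + (star y x + star y x)" for x y
    unfolding circ_def S2 ..
  define P where "P a b c = star (star a b) c - star a (star b c) - (star (star b a) c - star b (star a c))" for a b c
  define R where "R a b c = star (star a b) c - star (star a c) b" for a b c
  define I where "I a b c = circ a (circ b c) - circ b (circ a c) - circ (commutator circ b a) c" for a b c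
  have P0: "P a b c = 0" for a b c using assms(3) unfolding pre_lie_def P_def by simp
  have dir2: "R x y z = 0" if "\<And>a b c. I a b c = 0" for x y z
  proof (rule div6)
    have "R x y z + R x y z + R x y z + R x y z + R x y z + R x y z
      = P x y z + P x y z - P x z y - P x z y - P y z x - I y z x"
      unfolding R_def P_def I_def C commutator_def by (simp add: dist algebra_simps)
    then show "R x y z + R x y z + R x y z + R x y z + R x y z + R x y z = 0"
      using that P0 by simp
  qed
  have dir1: "I x y z = 0
     \<and> circ (commutator circ x y) z + circ (commutator circ y z) x + circ (commutator circ z x) y = 0
     \<and> scale 2 (circ x (commutator circ y z)) = circ (circ x y) z - circ (circ x z) y"
    if R0: "\<And>a b c. R a b c = 0" for x y z
  proof (intro conjI)
    have "I x y z = - P x y z - P x z y - P x z y + P y z x + P y z x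
        - R z x y - R z x y - R z x y - R z x y - R z x y - R z x y"
      unfolding R_def P_def I_def C commutator_def by (simp add: dist algebra_simps)
    then show "I x y z = 0" using R0 P0 by simp
    have "circ (commutator circ x y) z + circ (commutator circ y z) x + circ (commutator circ z x) y
        = P x y z + P x y z - P x z y - P x z y + P y z x + P y z x
          - R x y z - R x y z - R x y z + R y x z + R y x z + R y x z
          - R z x y - R z x y - R z x y"
      unfolding R_def P_def C commutator_def by (simp add: dist algebra_simps)
    then show "circ (commutator circ x y) z + circ (commutator circ y z) x + circ (commutator circ z x) y = 0"
      using R0 P0 by simp
    have "scale 2 (circ x (commutator circ y z)) - (circ (circ x y) z - circ (circ x z) y)
        = P x y z + P x y z - P x z y - P x z y - P y z x - P y z x - P y z x - P y z x
          - R x y z - R x y z - R x y z"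
      unfolding R_def P_def C commutator_def S2 by (simp add: dist algebra_simps)
    then show "scale 2 (circ x (commutator circ y z)) = circ (circ x y) z - circ (circ x z) y"
      using R0 P0 by simp
  qed
  have nov: "novikov star \<longleftrightarrow> (\<forall>a b c. R a b c = 0)"
    using assms(3) unfolding novikov_def R_def by simp
  have ap: "anti_pre_lie circ \<Longrightarrow> \<forall>a b c. I a b c = 0"
    unfolding anti_pre_lie_def I_def by simp
  show ?thesis
  proof (intro conjI iffI impI)
    assume "anti_pre_lie circ"
    then show "novikov star" using ap dir2 nov by blast
  next
    assume "novikov star"
    then have R0: "\<And>a b c. R a b c = 0" using nov by blast
    show "anti_pre_lie circ" unfolding anti_pre_lie_def
      using dir1[OF R0] unfolding I_def by simp
  next
    assume "novikov star"
    then have R0: "\<And>a b c. R a b c = 0" using nov by blast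
    show "admissible_novikov scale circ" unfolding admissible_novikov_def
      using dir1[OF R0] unfolding I_def by simp
  qed
qed

end
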